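(* Let $\mathcal{C}$ and $\mathcal{D}$ be classes of countable structures axiomatized by $\mathfrak{L}_{\omega_1\omega}$-sentences, regarded as categories whose morphisms are the embeddings between structures, and let $X_{\mathcal C}$, $X_{\mathcal D}$ be the corresponding standard Borel spaces of structures with universe $\mathbb{N}$ (with the logic action of $S_\infty$). Suppose $F:\mathcal{C}\to\mathcal{D}$ is a full embedding such that (i) $F$ maps objects with universe $\omega$ to objects with universe $\omega$, and (ii) there is a Borel function $f:X_{\mathcal C}\to X_{\mathcal D}$ with $f(x)\cong F(x)$ for every $x\in X_{\mathcal C}$. Then $\cong_{\mathcal C}\ \le_{\mathrm{SPB}}\ \cong_{\mathcal D}$, witnessed by $f$; in particular $\mathrm{Aut}(x)\cong\mathrm{Aut}(f(x))$ for every $x\in X_{\mathcal C}$.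
   Context: A full embedding of categories $F:\mathcal C\to\mathcal D$ is a functor that is injective on objects and such that for all objects $a,b$ the map $\mathrm{Hom}_{\mathcal C}(a,b)\to\mathrm{Hom}_{\mathcal D}(F(a),F(b))$, $h\mapsto F(h)$, is a bijection. For a Polish group $G$ with Borel actions on standard Borel spaces $X,Y$ with orbit equivalence relations $E_a,E_b$, $E_a\le_{\mathrm{SPB}}E_b$ (stabilizer-preserving Borel reduction) means there is a Borel $f:X\to Y$ with $x\,E_a\,y\iff f(x)\,E_b\,f(y)$ for all $x,y$, and such that the stabilizers $G_x$ and $G_{f(x)}$ are isomorphic groups for every $x\in X$. For $G=S_\infty$ acting on spaces of countable structures, this means $\mathrm{Aut}(x)\cong\mathrm{Aut}(f(x))$ for all $x$. $\cong_{\mathcal C}$ denotes isomorphism on $X_{\mathcal C}$. *)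

theory Defs
  imports "HOL-Analysis.Analysis" "HOL-Algebra.Group"
begin

type_synonym 'r struc = "nat set \<times> ('r \<Rightarrow> nat list set)"

definition wf_struc :: "('r \<Rightarrow> nat) \<Rightarrow> 'r struc \<Rightarrow> bool" where
  "wf_struc ar M \<longleftrightarrow> fst M \<noteq> {} \<and>
     (\<forall>r. \<forall>t\<in>snd M r. length t = ar r \<and> set t \<subseteq> fst M)"

datatype 'r fml =
    FRel 'r "nat list"
  | FEq nat nat
  | FNeg "'r fml"
  | FConj "nat \<Rightarrow> 'r fml"   \<comment> \<open>countable conjunction\<close>
  | FEx nat "'r fml"

primrec fv :: "'r fml \<Rightarrow> nat set" where
  "fv (FRel r vs) = set vs"
| "fv (FEq i j) = {i, j}"
| "fv (FNeg \<phi>) = fv \<phi>"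
| "fv (FConj \<phi>s) = \<Union> (range (fv \<circ> \<phi>s))"
| "fv (FEx i \<phi>) = fv \<phi> - {i}"

primrec wff :: "('r \<Rightarrow> nat) \<Rightarrow> 'r fml \<Rightarrow> bool" where
  "wff ar (FRel r vs) = (length vs = ar r)"
| "wff ar (FEq i j) = True"
| "wff ar (FNeg \<phi>) = wff ar \<phi>"
| "wff ar (FConj \<phi>s) = ((\<forall>n. wff ar (\<phi>s n)) \<and> finite (\<Union> (range (fv \<circ> \<phi>s))))"
| "wff ar (FEx i \<phi>) = wff ar \<phi>"

definition sentence :: "('r \<Rightarrow> nat) \<Rightarrow> 'r fml \<Rightarrow> bool" where
  "sentence ar \<phi> \<longleftrightarrow> wff ar \<phi> \<and> fv \<phi> = {}"

primrec sat :: "'r struc \<Rightarrow> (nat \<Rightarrow> nat) \<Rightarrow> 'r fml \<Rightarrow> bool" where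
  "sat M e (FRel r vs) = (map e vs \<in> snd M r)"
| "sat M e (FEq i j) = (e i = e j)"
| "sat M e (FNeg \<phi>) = (\<not> sat M e \<phi>)"
| "sat M e (FConj \<phi>s) = (\<forall>n. sat M e (\<phi>s n))"
| "sat M e (FEx i \<phi>) = (\<exists>a\<in>fst M. sat M (e(i := a)) \<phi>)"

definition models :: "'r struc \<Rightarrow> 'r fml \<Rightarrow> bool" where
  "models M \<phi> \<longleftrightarrow> (\<forall>e. (\<forall>i. e i \<in> fst M) \<longrightarrow> sat M e \<phi>)"

definition mod_class :: "('r \<Rightarrow> nat) \<Rightarrow> 'r fml \<Rightarrow> 'r struc set" where
  "mod_class ar \<sigma> = {M. wf_struc ar M \<and> models M \<sigma>}"

definition emb :: "'r struc \<Rightarrow> 'r struc \<Rightarrow> (nat \<Rightarrow> nat) \<Rightarrow> bool" where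
  "emb A B h \<longleftrightarrow> h \<in> extensional (fst A) \<and> h ` fst A \<subseteq> fst B \<and> inj_on h (fst A) \<and>
     (\<forall>r t. set t \<subseteq> fst A \<longrightarrow> (t \<in> snd A r \<longleftrightarrow> map h t \<in> snd B r))"

definition iso_struc :: "'r struc \<Rightarrow> 'r struc \<Rightarrow> bool" where
  "iso_struc A B \<longleftrightarrow> (\<exists>h. emb A B h \<and> h ` fst A = fst B)"

definition aut_group :: "'r struc \<Rightarrow> (nat \<Rightarrow> nat) monoid" where
  "aut_group M = \<lparr>carrier = {h. emb M M h \<and> h ` fst M = fst M},
                  mult = (\<lambda>g h. compose (fst M) g h),
                  one = restrict id (fst M)\<rparr>"

definition full_embedding ::
  "'r struc set \<Rightarrow> 's struc set \<Rightarrow> ('r struc \<Rightarrow> 's struc)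
   \<Rightarrow> ('r struc \<Rightarrow> 'r struc \<Rightarrow> (nat \<Rightarrow> nat) \<Rightarrow> (nat \<Rightarrow> nat)) \<Rightarrow> bool" where
  "full_embedding C D Fo Fm \<longleftrightarrow>
     (\<forall>a\<in>C. Fo a \<in> D) \<and>
     (\<forall>a\<in>C. \<forall>b\<in>C. \<forall>h. emb a b h \<longrightarrow> emb (Fo a) (Fo b) (Fm a b h)) \<and>
     (\<forall>a\<in>C. Fm a a (restrict id (fst a)) = restrict id (fst (Fo a))) \<and>
     (\<forall>a\<in>C. \<forall>b\<in>C. \<forall>c\<in>C. \<forall>h g. emb a b h \<and> emb b c g \<longrightarrow>
        Fm a c (compose (fst a) g h) = compose (fst (Fo a)) (Fm b c g) (Fm a b h)) \<and>
     inj_on Fo C \<and>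
     (\<forall>a\<in>C. \<forall>b\<in>C. bij_betw (Fm a b) {h. emb a b h} {k. emb (Fo a) (Fo b) k})"

definition structs_N :: "('r \<Rightarrow> nat) \<Rightarrow> 'r struc set" where
  "structs_N ar = {M. wf_struc ar M \<and> fst M = UNIV}"

text \<open>Borel structure generated by the basic sets "tuple t is in relation r"
  (= the product topology on the space of structures).\<close>
definition struc_borel :: "('r \<Rightarrow> nat) \<Rightarrow> 'r struc measure" where
  "struc_borel ar = sigma (structs_N ar)
      {{M \<in> structs_N ar. t \<in> snd M r} | r t. True}"

definition X_of :: "('r \<Rightarrow> nat) \<Rightarrow> 'r fml \<Rightarrow> 'r struc set" where
  "X_of ar \<sigma> = {M \<in> mod_class ar \<sigma>. fst M = UNIV}"

definition X_space :: "('r \<Rightarrow> nat) \<Rightarrow> 'r fml \<Rightarrow> 'r struc measure" where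
  "X_space ar \<sigma> = restrict_space (struc_borel ar) (X_of ar \<sigma>)"

text \<open>Stabilizer-preserving Borel reduction of isomorphism (orbit equivalence of the
  logic action of S_infinity) on X_C to that on X_D, via f; the stabilizer of x is Aut(x).\<close>
definition spb_reduction ::
  "('r \<Rightarrow> nat) \<Rightarrow> 'r fml \<Rightarrow> ('s \<Rightarrow> nat) \<Rightarrow> 's fml \<Rightarrow> ('r struc \<Rightarrow> 's struc) \<Rightarrow> bool" where
  "spb_reduction arC \<sigma> arD \<tau> f \<longleftrightarrow>
     f \<in> measurable (X_space arC \<sigma>) (X_space arD \<tau>) \<and>
     (\<forall>x\<in>X_of arC \<sigma>. \<forall>y\<in>X_of arC \<sigma>. iso_struc x y \<longleftrightarrow> iso_struc (f x) (f y)) \<and>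
     (\<forall>x\<in>X_of arC \<sigma>. aut_group x \<cong> aut_group (f x))"

end

theory Submission
  imports Defs
begin

lemma emb_id: "emb A A (restrict id (fst A))"
proof -
  have "\<And>t. set t \<subseteq> fst A \<Longrightarrow> map (restrict id (fst A)) t = t"
    by (rule map_idI) auto
  then show ?thesis unfolding emb_def by (auto simp: inj_on_def)
qed

lemma emb_comp: assumes "emb A B h" "emb B C g" shows "emb A C (compose (fst A) g h)"
proof -
  have m: "\<And>t. set t \<subseteq> fst A \<Longrightarrow> map (compose (fst A) g h) t = map g (map h t)"
    by (auto simp: compose_def intro!: map_cong)
  have s: "\<And>t. set t \<subseteq> fst A \<Longrightarrow> set (map h t) \<subseteq> fst B"
    using assms(1) unfolding emb_def by auto
  show ?thesis using assms unfolding emb_def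
    apply (intro conjI)
    subgoal by (simp add: compose_def)
    subgoal by (auto simp: compose_def)
    subgoal by (simp add: compose_def inj_on_def) (metis image_subset_iff)
    subgoal using m s by (metis (no_types, lifting))
    done
qed

lemma emb_inv:
  assumes "emb A B h" "h ` fst A = fst B"
  shows "emb B A (restrict (inv_into (fst A) h) (fst B))"
    "\<forall>z\<in>fst A. restrict (inv_into (fst A) h) (fst B) (h z) = z"
    "\<forall>w\<in>fst B. h (restrict (inv_into (fst A) h) (fst B) w) = w"
proof -
  let ?g = "restrict (inv_into (fst A) h) (fst B)"
  have inj: "inj_on h (fst A)" using assms unfolding emb_def by auto
  show g1: "\<forall>z\<in>fst A. ?g (h z) = z" using inj assms(2) by auto
  show g2: "\<forall>w\<in>fst B. h (?g w) = w" using assms(2) by (auto simp: f_inv_into_f)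
  have gi: "\<forall>w\<in>fst B. ?g w \<in> fst A" using assms(2) by (auto intro: inv_into_into)
  have m: "\<And>t. set t \<subseteq> fst B \<Longrightarrow> map h (map ?g t) = t"
    using g2 by (auto intro!: map_idI)
  have s: "\<And>t. set t \<subseteq> fst B \<Longrightarrow> set (map ?g t) \<subseteq> fst A" using gi by auto
  show "emb B A ?g" unfolding emb_def
    apply (intro conjI)
    subgoal by simp
    subgoal using gi by auto
    subgoal using g2 by (metis inj_onI)
    subgoal using assms(1) m s unfolding emb_def by metis
    done
qed

lemma iso_struc_sym: "iso_struc A B \<Longrightarrow> iso_struc B A"
proof -
  assume "iso_struc A B"
  then obtain h where h: "emb A B h" "h ` fst A = fst B" unfolding iso_struc_def by auto
  let ?g = "restrict (inv_into (fst A) h) (fst B)"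
  have "?g ` fst B = fst A"
  proof
    show "?g ` fst B \<subseteq> fst A" using emb_inv(1)[OF h] unfolding emb_def by auto
    show "fst A \<subseteq> ?g ` fst B" using emb_inv(2)[OF h] h(2) by force
  qed
  then show ?thesis using emb_inv(1)[OF h] unfolding iso_struc_def by blast
qed

lemma iso_struc_trans: "iso_struc A B \<Longrightarrow> iso_struc B C \<Longrightarrow> iso_struc A C"
proof -
  assume "iso_struc A B" "iso_struc B C"
  then obtain h g where "emb A B h" "h ` fst A = fst B" "emb B C g" "g ` fst B = fst C"
    unfolding iso_struc_def by auto
  moreover have "compose (fst A) g h ` fst A = g ` h ` fst A" by (auto simp: compose_def)
  ultimately show ?thesis using emb_comp unfolding iso_struc_def by metis
qed

lemma aut_carrier: "a \<in> carrier (aut_group A) \<longleftrightarrow> emb A A a \<and> a ` fst A = fst A"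
  by (simp add: aut_group_def)

lemma aut_mult: "a \<otimes>\<^bsub>aut_group A\<^esub> b = compose (fst A) a b"
  by (simp add: aut_group_def)

lemma aut_iso_generic:
  assumes "\<And>a. a \<in> carrier (aut_group A) \<Longrightarrow> \<phi> a \<in> carrier (aut_group B)"
    "\<And>a b. a \<in> carrier (aut_group A) \<Longrightarrow> b \<in> carrier (aut_group A) \<Longrightarrow>
       \<phi> (compose (fst A) a b) = compose (fst B) (\<phi> a) (\<phi> b)"
    "inj_on \<phi> (carrier (aut_group A))"
    "\<And>c. c \<in> carrier (aut_group B) \<Longrightarrow> \<exists>a\<in>carrier (aut_group A). \<phi> a = c"
  shows "aut_group A \<cong> aut_group B"
proof -
  have "\<phi> \<in> iso (aut_group A) (aut_group B)"
    unfolding iso_def hom_def bij_betw_def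
    using assms by (auto simp: aut_mult image_iff) (metis)
  then show ?thesis by (rule is_isoI)
qed

locale isopair =
  fixes A B :: "'r struc" and h g :: "nat \<Rightarrow> nat"
  assumes h: "emb A B h" and g: "emb B A g" and hs: "h ` fst A = fst B" and gs: "g ` fst B = fst A"
    and gh: "\<forall>z\<in>fst A. g (h z) = z" and hg: "\<forall>w\<in>fst B. h (g w) = w"
begin

lemma sym: "isopair B A g h"
  using h g hs gs gh hg by unfold_locales auto

definition \<phi> where "\<phi> a = compose (fst B) h (compose (fst B) a g)"

lemma phi_in: assumes "a \<in> carrier (aut_group A)" shows "\<phi> a \<in> carrier (aut_group B)"
proof -
  have a: "emb A A a" "a ` fst A = fst A" using assms by (auto simp: aut_carrier)
  have "emb B B (\<phi> a)" unfolding \<phi>_def by (rule emb_comp[OF emb_comp[OF g a(1)] h])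
  moreover have "\<phi> a ` fst B = h ` a ` g ` fst B" by (auto simp: \<phi>_def compose_def)
  ultimately show ?thesis using a hs gs by (simp add: aut_carrier)
qed

lemma phi_ap: "w \<in> fst B \<Longrightarrow> \<phi> a w = h (a (g w))"
  by (simp add: \<phi>_def compose_def)

lemma phi_out: "w \<notin> fst B \<Longrightarrow> \<phi> a w = undefined"
  by (simp add: \<phi>_def compose_def)

lemma ext_aut: "a \<in> carrier (aut_group A) \<Longrightarrow> z \<notin> fst A \<Longrightarrow> a z = undefined"
  by (auto simp: aut_carrier emb_def extensional_def)

lemma aut_in: "a \<in> carrier (aut_group A) \<Longrightarrow> z \<in> fst A \<Longrightarrow> a z \<in> fst A"
  by (auto simp: aut_carrier)

lemma g_in: "w \<in> fst B \<Longrightarrow> g w \<in> fst A" using gs by auto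
lemma h_in: "z \<in> fst A \<Longrightarrow> h z \<in> fst B" using hs by auto

lemma result: "aut_group A \<cong> aut_group B"
proof (rule aut_iso_generic[of A \<phi>])
  show "\<And>a. a \<in> carrier (aut_group A) \<Longrightarrow> \<phi> a \<in> carrier (aut_group B)" by (rule phi_in)
  show "\<phi> (compose (fst A) a b) = compose (fst B) (\<phi> a) (\<phi> b)"
    if "a \<in> carrier (aut_group A)" "b \<in> carrier (aut_group A)" for a b
  proof
    fix w show "\<phi> (compose (fst A) a b) w = compose (fst B) (\<phi> a) (\<phi> b) w"
    proof (cases "w \<in> fst B")
      case True
      then show ?thesis using that g_in aut_in h_in gh
        by (simp add: phi_ap compose_def)
    qed (simp add: phi_out compose_def)
  qed
  show "inj_on \<phi> (carrier (aut_group A))"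
  proof (rule inj_onI)
    fix a a' assume a: "a \<in> carrier (aut_group A)" "a' \<in> carrier (aut_group A)" "\<phi> a = \<phi> a'"
    show "a = a'"
    proof
      fix z show "a z = a' z"
      proof (cases "z \<in> fst A")
        case True
        then have "\<phi> a (h z) = \<phi> a' (h z)" using a by simp
        then have "g (h (a z)) = g (h (a' z))" using True h_in gh by (simp add: phi_ap)
        then show ?thesis using True gh aut_in a by simp
      qed (simp add: ext_aut a)
    qed
  qed
  show "\<exists>a\<in>carrier (aut_group A). \<phi> a = c" if c: "c \<in> carrier (aut_group B)" for c
  proof (intro bexI)
    show "isopair.\<phi> A g h c \<in> carrier (aut_group A)" using isopair.phi_in[OF sym c] .
    show "\<phi> (isopair.\<phi> A g h c) = c"
    proof
      fix w show "\<phi> (isopair.\<phi> A g h c) w = c w"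
      proof (cases "w \<in> fst B")
        case True
        then show ?thesis using isopair.phi_ap[OF sym] g_in hg isopair.aut_in[OF sym c]
          by (simp add: phi_ap)
      qed (simp add: phi_out isopair.ext_aut[OF sym c])
    qed
  qed
qed

end

lemma iso_struc_aut: assumes "iso_struc A B" shows "aut_group A \<cong> aut_group B"
proof -
  obtain h where h: "emb A B h" "h ` fst A = fst B" using assms unfolding iso_struc_def by auto
  let ?g = "restrict (inv_into (fst A) h) (fst B)"
  have gs: "?g ` fst B = fst A"
  proof
    show "?g ` fst B \<subseteq> fst A" using emb_inv(1)[OF h] unfolding emb_def by auto
    show "fst A \<subseteq> ?g ` fst B" using emb_inv(2)[OF h] h(2) by force
  qed
  have "isopair A B h ?g" using h gs emb_inv[OF h] by unfold_locales auto
  then show ?thesis by (rule isopair.result)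
qed


context
  fixes C D Fo Fm
  assumes fe: "full_embedding C D Fo Fm"
begin

lemma F1: "x \<in> C \<Longrightarrow> y \<in> C \<Longrightarrow> emb x y h \<Longrightarrow> emb (Fo x) (Fo y) (Fm x y h)"
  using fe unfolding full_embedding_def by blast
lemma F2: "x \<in> C \<Longrightarrow> Fm x x (restrict id (fst x)) = restrict id (fst (Fo x))"
  using fe unfolding full_embedding_def by blast
lemma F3: "x \<in> C \<Longrightarrow> y \<in> C \<Longrightarrow> z \<in> C \<Longrightarrow> emb x y h \<Longrightarrow> emb y z g \<Longrightarrow>
   Fm x z (compose (fst x) g h) = compose (fst (Fo x)) (Fm y z g) (Fm x y h)"
  using fe unfolding full_embedding_def by blast
lemma F4: "x \<in> C \<Longrightarrow> y \<in> C \<Longrightarrow> bij_betw (Fm x y) {h. emb x y h} {k. emb (Fo x) (Fo y) k}"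
  using fe unfolding full_embedding_def by blast

lemma F_surj1:
  assumes x: "x \<in> C" and y: "y \<in> C" and h: "emb x y h" "h ` fst x = fst y"
  shows "Fm x y h ` fst (Fo x) = fst (Fo y)"
proof -
  let ?g = "restrict (inv_into (fst x) h) (fst y)"
  note gi = emb_inv[OF h]
  have hg: "compose (fst y) h ?g = restrict id (fst y)"
    using gi(3) by (auto simp: compose_def)
  have "compose (fst (Fo y)) (Fm x y h) (Fm y x ?g) = restrict id (fst (Fo y))"
    using F3[OF y x y gi(1) h(1)] F2[OF y] hg by simp
  then have k: "\<forall>k\<in>fst (Fo y). Fm x y h (Fm y x ?g k) = k"
    by (metis compose_eq id_apply restrict_apply')
  have "\<forall>k\<in>fst (Fo y). Fm y x ?g k \<in> fst (Fo x)"
    using F1[OF y x gi(1)] unfolding emb_def by auto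
  then have "fst (Fo y) \<subseteq> Fm x y h ` fst (Fo x)" using k by (metis image_eqI subsetI)
  moreover have "Fm x y h ` fst (Fo x) \<subseteq> fst (Fo y)" using F1[OF x y h(1)] unfolding emb_def by auto
  ultimately show ?thesis by blast
qed

lemma F_surj2:
  assumes x: "x \<in> C" and y: "y \<in> C" and h: "emb x y h" "Fm x y h ` fst (Fo x) = fst (Fo y)"
  shows "h ` fst x = fst y"
proof -
  let ?k = "Fm x y h"
  let ?k' = "restrict (inv_into (fst (Fo x)) ?k) (fst (Fo y))"
  have ke: "emb (Fo x) (Fo y) ?k" using F1[OF x y h(1)] .
  note ki = emb_inv[OF ke h(2)]
  obtain g where g: "emb y x g" "Fm y x g = ?k'"
    using F4[OF y x] ki(1) unfolding bij_betw_def by (smt (verit) image_iff mem_Collect_eq)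
  have "Fm y y (compose (fst y) h g) = compose (fst (Fo y)) ?k ?k'"
    using F3[OF y x y g(1) h(1)] g(2) by simp
  also have "\<dots> = restrict id (fst (Fo y))"
    using ki(3) by (auto simp: compose_def)
  also have "\<dots> = Fm y y (restrict id (fst y))" using F2[OF y] by simp
  finally have "compose (fst y) h g = restrict id (fst y)"
    using F4[OF y y] emb_comp[OF g(1) h(1)] emb_id[of y]
    unfolding bij_betw_def inj_on_def by blast
  then have "\<forall>w\<in>fst y. h (g w) = w" by (metis compose_eq id_apply restrict_apply')
  moreover have "\<forall>w\<in>fst y. g w \<in> fst x" using g(1) unfolding emb_def by auto
  ultimately have "fst y \<subseteq> h ` fst x" by (metis image_eqI subsetI)
  moreover have "h ` fst x \<subseteq> fst y" using h(1) unfolding emb_def by auto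
  ultimately show ?thesis by blast
qed

lemma F_iso: assumes x: "x \<in> C" and y: "y \<in> C"
  shows "iso_struc x y \<longleftrightarrow> iso_struc (Fo x) (Fo y)"
proof
  assume "iso_struc x y"
  then obtain h where "emb x y h" "h ` fst x = fst y" unfolding iso_struc_def by auto
  then show "iso_struc (Fo x) (Fo y)" unfolding iso_struc_def
    using F1[OF x y] F_surj1[OF x y] by blast
next
  assume "iso_struc (Fo x) (Fo y)"
  then obtain k where k: "emb (Fo x) (Fo y) k" "k ` fst (Fo x) = fst (Fo y)" unfolding iso_struc_def by auto
  then obtain h where "emb x y h" "Fm x y h = k"
    using F4[OF x y] unfolding bij_betw_def by (smt (verit) image_iff mem_Collect_eq)
  then show "iso_struc x y" unfolding iso_struc_def using F_surj2[OF x y] k by blast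
qed

lemma F_aut: assumes x: "x \<in> C" shows "aut_group x \<cong> aut_group (Fo x)"
proof (rule aut_iso_generic[of x "Fm x x"])
  show "\<And>a. a \<in> carrier (aut_group x) \<Longrightarrow> Fm x x a \<in> carrier (aut_group (Fo x))"
    using F1[OF x x] F_surj1[OF x x] by (simp add: aut_carrier)
  show "\<And>a b. a \<in> carrier (aut_group x) \<Longrightarrow> b \<in> carrier (aut_group x) \<Longrightarrow>
       Fm x x (compose (fst x) a b) = compose (fst (Fo x)) (Fm x x a) (Fm x x b)"
    using F3[OF x x x] by (simp add: aut_carrier)
  show "inj_on (Fm x x) (carrier (aut_group x))"
    using F4[OF x x] unfolding bij_betw_def by (rule inj_on_subset[OF conjunct1]) (auto simp: aut_carrier)
  show "\<exists>a\<in>carrier (aut_group x). Fm x x a = c" if c: "c \<in> carrier (aut_group (Fo x))" for c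
  proof -
    obtain a where a: "emb x x a" "Fm x x a = c"
      using c F4[OF x x] unfolding bij_betw_def aut_carrier by (smt (verit) image_iff mem_Collect_eq)
    then show ?thesis using F_surj2[OF x x] c by (auto simp: aut_carrier)
  qed
qed

end

theorem proposition5p6:
  fixes arC :: "'r::countable \<Rightarrow> nat" and arD :: "'s::countable \<Rightarrow> nat"
    and \<sigma> :: "'r fml" and \<tau> :: "'s fml"
    and Fo :: "'r struc \<Rightarrow> 's struc"
    and Fm :: "'r struc \<Rightarrow> 'r struc \<Rightarrow> (nat \<Rightarrow> nat) \<Rightarrow> (nat \<Rightarrow> nat)"
    and f :: "'r struc \<Rightarrow> 's struc"
  assumes "sentence arC \<sigma>" and "sentence arD \<tau>"
    and "full_embedding (mod_class arC \<sigma>) (mod_class arD \<tau>) Fo Fm"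
    and "\<forall>x\<in>mod_class arC \<sigma>. fst x = UNIV \<longrightarrow> fst (Fo x) = UNIV"
    and "f \<in> measurable (X_space arC \<sigma>) (X_space arD \<tau>)"
    and "\<forall>x\<in>X_of arC \<sigma>. iso_struc (f x) (Fo x)"
  shows "spb_reduction arC \<sigma> arD \<tau> f"
proof -
  have sub: "X_of arC \<sigma> \<subseteq> mod_class arC \<sigma>" by (auto simp: X_of_def)
  note fe = assms(3)
  have A: "iso_struc x y \<longleftrightarrow> iso_struc (f x) (f y)" if "x \<in> X_of arC \<sigma>" "y \<in> X_of arC \<sigma>" for x y
  proof -
    have 1: "iso_struc (f x) (Fo x)" "iso_struc (f y) (Fo y)" using assms(6) that by auto
    have "iso_struc x y \<longleftrightarrow> iso_struc (Fo x) (Fo y)" using F_iso[OF fe] that sub by blast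
    also have "\<dots> \<longleftrightarrow> iso_struc (f x) (f y)"
      using 1 iso_struc_sym iso_struc_trans by metis
    finally show ?thesis .
  qed
  have B: "aut_group x \<cong> aut_group (f x)" if "x \<in> X_of arC \<sigma>" for x
  proof -
    have "aut_group x \<cong> aut_group (Fo x)" using F_aut[OF fe] that sub by blast
    moreover have "aut_group (Fo x) \<cong> aut_group (f x)"
      using iso_struc_aut iso_struc_sym assms(6) that by blast
    ultimately show ?thesis by (rule iso_trans)
  qed
  show ?thesis unfolding spb_reduction_def using assms(5) A B by blast
qed

end
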